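(* Let $\mathcal{F}=(M,\{A^u\}_{u\in Q})$ be an FDFA and $\underline{B}$ the Büchi automaton constructed from $\mathcal{F}$ as in the context. Let $u\in\Sigma^*$ and $v\in\Sigma^+$. If $(u,v^k)$ is accepted by $\mathcal{F}$ for every $k\geq1$, then $uv^\omega\in UP(L(\underline{B}))$.
   Context: $\Sigma$ is a finite alphabet. For a complete DFA $A$ and finite word $w$, $A(w)$ is the state reached from the initial state on $w$. An FDFA is $\mathcal{F}=(M,\{A^q\}_{q\in Q})$ with $M=(\Sigma,Q,q_0,\delta)$ a complete DFA without accepting states and each $A^q=(\Sigma,Q_q,s_q,F_q,\delta_q)$ a complete DFA. $(u,v)$ is accepted by $\mathcal{F}$ iff $M(uv)=M(u)$ and $v\in L(A^{M(u)})$. For an $\omega$-language $L'$, $UP(L')$ is the set of ultimately periodic words in $L'$. Construction of $\underline{B}$: for a DFA $D$ and states $s,t$, $D^s_t$ is $D$ with initial state $s$ and accepting set $\{t\}$. For $u\in Q$, $v\in F_u$ let $\underline{P}_{(u,v)}=M^u_u\times(A^u)^{s_u}_v\times(A^u)^v_v$ (synchronous product, single accepting state $f_P$, initial state $s_P$, states $Q_P$, transitions $\delta_P$). From it form the Büchi automaton with $\epsilon$-transitions $(\Sigma,Q_P\cup\{f\},s_P,\{f\},\delta_P\cup\{(f,\epsilon,s_P),(f_P,\epsilon,f)\})$ with $f$ fresh. $\underline{B}$ has state set $Q$ plus disjoint copies of these automata for all $u\in Q$, $v\in F_u$; initial state $q_0$; accepting states the fresh states $f$; transitions $\delta$, those of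 the components, and $\epsilon$-transitions from $u\in Q$ to the initial state of the component for $(u,v)$. An infinite word is accepted if some run (with $\epsilon$-moves) reading it visits accepting states infinitely often. *)

theory Defs
  imports Main
begin

definition run :: "('q \<Rightarrow> 'a \<Rightarrow> 'q) \<Rightarrow> 'q \<Rightarrow> 'a list \<Rightarrow> 'q" where
  "run d s w = fold (\<lambda>a q. d q a) w s"

text \<open>An FDFA over alphabet 'a: leading DFA M = (Q = UNIV :: 'q, q0, delta) without accepting
  states, and for every q a complete progress DFA A^q = (UNIV :: 's, s q, F q, dA q).
  Finiteness of alphabet and state sets is imposed via the sort finite in the theorem.\<close>
record ('a, 'q, 's) fdfa =
  m_init :: 'q
  m_delta :: "'q \<Rightarrow> 'a \<Rightarrow> 'q"
  p_init :: "'q \<Rightarrow> 's"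
  p_final :: "'q \<Rightarrow> 's set"
  p_delta :: "'q \<Rightarrow> 's \<Rightarrow> 'a \<Rightarrow> 's"

definition M_of :: "('a, 'q, 's) fdfa \<Rightarrow> 'a list \<Rightarrow> 'q" where
  "M_of F w = run (m_delta F) (m_init F) w"

definition fdfa_accepts :: "('a, 'q, 's) fdfa \<Rightarrow> 'a list \<Rightarrow> 'a list \<Rightarrow> bool" where
  "fdfa_accepts F u v \<longleftrightarrow>
     M_of F (u @ v) = M_of F u \<and>
     run (p_delta F (M_of F u)) (p_init F (M_of F u)) v \<in> p_final F (M_of F u)"

record ('a, 'b) enba =
  b_init :: 'b
  b_trans :: "('b \<times> 'a option \<times> 'b) set"
  b_acc :: "'b set"

text \<open>A run on an infinite word w: states r, labels l (None = epsilon move); the letters read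
  (non-epsilon labels, in order) spell w, infinitely many letters are read, and accepting states
  are visited infinitely often.\<close>
definition enba_accepts :: "('a, 'b) enba \<Rightarrow> (nat \<Rightarrow> 'a) \<Rightarrow> bool" where
  "enba_accepts B w \<longleftrightarrow>
     (\<exists>r l. r 0 = b_init B \<and>
        (\<forall>i. (r i, l i, r (Suc i)) \<in> b_trans B) \<and>
        (\<forall>i. l i \<noteq> None \<longrightarrow> l i = Some (w (card {j. j < i \<and> l j \<noteq> None}))) \<and>
        infinite {i. l i \<noteq> None} \<and>
        infinite {i. r i \<in> b_acc B})"

definition enba_lang :: "('a, 'b) enba \<Rightarrow> (nat \<Rightarrow> 'a) set" where
  "enba_lang B = {w. enba_accepts B w}"

text \<open>The ultimately periodic word u v^omega (for v nonempty).\<close>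
definition upw :: "'a list \<Rightarrow> 'a list \<Rightarrow> nat \<Rightarrow> 'a" where
  "upw u v i = (if i < length u then u ! i else v ! ((i - length u) mod length v))"

definition UP :: "(nat \<Rightarrow> 'a) set \<Rightarrow> (nat \<Rightarrow> 'a) set" where
  "UP L = {w \<in> L. \<exists>u v. v \<noteq> [] \<and> w = upw u v}"

text \<open>States: Inl q for q in Q; Inr (u, v, Some p) for the product state p of the component
  for (u,v); Inr (u, v, None) for the fresh state f of that component. The product P_(u,v) = M^u_u x (A^u)^(s_u)_v x (A^u)^v_v has initial state
  (u, s_u, v) and single accepting state f_P = (u, v, v).\<close>
type_synonym ('q, 's) bstate = "'q + ('q \<times> 's \<times> ('q \<times> 's \<times> 's) option)"

definition B_of :: "('a, 'q, 's) fdfa \<Rightarrow> ('a, ('q, 's) bstate) enba" where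
  "B_of F = \<lparr> b_init = Inl (m_init F),
     b_trans =
       {(Inl q, Some a, Inl (m_delta F q a)) | q a. True}
     \<union> {(Inl u, None, Inr (u, v, Some (u, p_init F u, v))) | u v. v \<in> p_final F u}
     \<union> {(Inr (u, v, Some (p1, p2, p3)), Some a,
          Inr (u, v, Some (m_delta F p1 a, p_delta F u p2 a, p_delta F u p3 a)))
         | u v p1 p2 p3 a. v \<in> p_final F u}
     \<union> {(Inr (u, v, Some (u, v, v)), None, Inr (u, v, None)) | u v. v \<in> p_final F u}
     \<union> {(Inr (u, v, None), None, Inr (u, v, Some (u, p_init F u, v))) | u v. v \<in> p_final F u},
     b_acc = {Inr (u, v, None) | u v. v \<in> p_final F u} \<rparr>"

end

theory Submission
  imports Defs
begin

lemma run_append: "run d s (xs @ ys) = run d (run d s xs) ys"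
  by (simp add: run_def)

lemma run_take_Suc: "j < length xs \<Longrightarrow> run d s (take (Suc j) xs) = d (run d s (take j xs)) (xs!j)"
  by (simp add: take_Suc_conv_app_nth run_append) (simp add: run_def)

lemma run_rep: "run d s (concat (replicate k v)) = ((\<lambda>x. run d x v)^^k) s"
  by (induction k arbitrary: s) (simp_all add: run_append, simp add: run_def, metis comp_apply funpow.simps(2) funpow_Suc_right)

lemma funpow_period:
  fixes h :: "'a \<Rightarrow> 'a"
  assumes "(h^^(a+p)) x = (h^^a) x" "a \<le> c"
  shows "(h^^(c + p*N)) x = (h^^c) x"
proof (induction N)
  case 0 then show ?case by simp
next
  case (Suc N)
  have "(h^^(c + p*Suc N)) x = (h^^p) ((h^^(c + p*N)) x)"
  proof -
    have "c + p*Suc N = p + (c+p*N)" by simp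
    then show ?thesis by (simp only: funpow_add comp_apply)
  qed
  also have "\<dots> = (h^^p) ((h^^c) x)" using Suc by simp
  also have "\<dots> = (h^^(c-a)) ((h^^(a+p)) x)"
  proof -
    have "p + c = (c - a) + (a + p)" using assms(2) by simp
    then show ?thesis by (metis funpow_add comp_apply)
  qed
  also have "\<dots> = (h^^(c-a)) ((h^^a) x)" using assms by simp
  also have "\<dots> = (h^^c) x" using assms(2)
    by (metis funpow_add comp_apply le_add_diff_inverse2)
  finally show ?case .
qed

lemma cnt_Suc: "card {j. j < Suc i \<and> P j} = card {j. j < i \<and> P j} + (if P i then 1 else 0)"
proof -
  have "{j. j < Suc i \<and> P j} = (if P i then insert i {j. j < i \<and> P j} else {j. j < i \<and> P j})"
    by (auto simp: less_Suc_eq)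
  then show ?thesis by simp
qed

lemma concat_rep_nth: "j < k * length v \<Longrightarrow> concat (replicate k v) ! j = v ! (j mod length v)"
proof (induction k arbitrary: j)
  case 0 then show ?case by simp
next
  case (Suc k)
  show ?case
  proof (cases "j < length v")
    case True then show ?thesis by (simp add: nth_append)
  next
    case False
    then have "concat (replicate (Suc k) v) ! j = concat (replicate k v) ! (j - length v)"
      by (simp add: nth_append)
    also have "\<dots> = v ! ((j - length v) mod length v)" using Suc False by simp
    finally show ?thesis using False by (simp add: le_mod_geq)
  qed
qed

lemma Suc_divmod:
  assumes "(M::nat) > 0"
  shows "Suc d div M = (if Suc (d mod M) = M then Suc (d div M) else d div M)
       \<and> Suc d mod M = (if Suc (d mod M) = M then 0 else Suc (d mod M))"
proof -
  have e: "Suc d = d div M * M + Suc (d mod M)" by simp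
  have lt: "d mod M < M" using assms by simp
  show ?thesis
  proof (cases "Suc (d mod M) = M")
    case True
    then have "Suc d = Suc (d div M) * M" using e by simp
    then show ?thesis using True assms by (metis div_mult_self1_is_m mod_mult_self1_is_0 mult.commute)
  next
    case False
    then have "Suc (d mod M) < M" using lt by simp
    then show ?thesis using False e assms
      by (metis div_mult_self1 mod_less div_less add.commute add_0 mod_mult_self1 not_gr0)
  qed
qed

lemma inj_lin: "(B::nat) > 0 \<Longrightarrow> inj (\<lambda>c. A + c*B)"
  by (rule injI) simp

lemma inj_range_inf: "inj (f::nat \<Rightarrow> 'b) \<Longrightarrow> range f \<subseteq> S \<Longrightarrow> infinite S"
  by (metis finite_imageD infinite_UNIV_nat finite_subset)

theorem lemma4:
  fixes F :: "('a::finite, 'q::finite, 's::finite) fdfa"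
    and u v :: "'a list"
  assumes "v \<noteq> []"
    and "\<forall>k\<ge>1. fdfa_accepts F u (concat (replicate k v))"
  shows "upw u v \<in> UP (enba_lang (B_of F))"
proof -
  define q where "q = M_of F u"
  define md where "md = m_delta F"
  define pd where "pd = p_delta F q"
  define s0 where "s0 = p_init F q"
  define h where "h = (\<lambda>x. run pd x v)"
  have "\<not> inj (\<lambda>N. (h^^N) s0)"
  proof
    assume "inj (\<lambda>N. (h^^N) s0)"
    then have "finite (UNIV :: nat set)"
      using finite_imageD[of "\<lambda>N. (h^^N) s0" UNIV] by simp
    then show False by simp
  qed
  then obtain a b where ab: "a < b" "(h^^a) s0 = (h^^b) s0"
    unfolding inj_def by (metis linorder_neqE_nat)
  define p where "p = b - a"
  define k where "k = p * Suc a"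
  have p0: "p > 0" using ab by (simp add: p_def)
  have k1: "k \<ge> 1" using p0 by (simp add: k_def)
  have "1*a \<le> p*a" using p0 by (intro mult_le_mono1) simp
  then have ka: "a \<le> k" unfolding k_def mult_Suc_right by (metis mult_1 trans_le_add2)
  define V where "V = concat (replicate k v)"
  define t where "t = (h^^k) s0"
  have per: "(h^^(a+p)) s0 = (h^^a) s0" using ab by (simp add: p_def)
  have acc: "fdfa_accepts F u V" using assms(2) k1 by (simp add: V_def)
  have tF: "t \<in> p_final F q"
    using acc by (simp add: fdfa_accepts_def t_def V_def run_rep h_def pd_def s0_def q_def)
  have Mq: "run md q V = q"
    using acc by (simp add: fdfa_accepts_def M_of_def run_append q_def md_def)
  have s0V: "run pd s0 V = t" by (simp add: V_def run_rep h_def t_def)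
  have tV: "run pd t V = t"
  proof -
    have "run pd t V = (h^^k) ((h^^k) s0)" by (simp add: V_def run_rep h_def t_def)
    also have "\<dots> = (h^^(k + p*Suc a)) s0" by (simp add: k_def funpow_add)
    also have "\<dots> = t" using funpow_period[OF per ka, of "Suc a"] by (simp only: t_def)
    finally show ?thesis .
  qed
  define n where "n = length u"
  define m where "m = length V"
  have mk: "m = k * length v" by (simp add: m_def V_def length_concat sum_list_replicate)
  have m0: "m > 0" using mk k1 assms(1) by simp
  define r where "r = (\<lambda>i. if i < n then Inl (run md (m_init F) (take i u)) else if i = n then Inl q
     else (let j = (i - Suc n) mod (m+2) in if j \<le> m then
       Inr (q, t, Some (run md q (take j V), run pd s0 (take j V), run pd t (take j V)))
       else Inr (q, t, None)))"
  define l where "l = (\<lambda>i. if i < n then Some (u!i) else if i = n then None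
     else (let j = (i - Suc n) mod (m+2) in if j < m then Some (V!j) else None))"
  define g where "g = (\<lambda>i. if i \<le> n then i else
     n + ((i - Suc n) div (m+2))*m + min ((i - Suc n) mod (m+2)) m)"
  have cnt: "card {j. j < i \<and> l j \<noteq> None} = g i" for i
  proof (induction i)
    case 0 then show ?case by (simp add: g_def)
  next
    case (Suc i)
    have "card {j. j < Suc i \<and> l j \<noteq> None} = g i + (if l i \<noteq> None then 1 else 0)"
      using Suc by (simp add: cnt_Suc)
    also have "\<dots> = g (Suc i)"
    proof (cases "i < n")
      case True then show ?thesis by (simp add: g_def l_def)
    next
      case False
      show ?thesis
      proof (cases "i = n")
        case True then show ?thesis by (simp add: g_def l_def)
      next
        case False2: False
        define d where "d = i - Suc n"
        have si: "Suc i - Suc n = Suc d" using False False2 by (simp add: d_def)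
        have dm: "d mod (m+2) < m+2" by simp
        show ?thesis using Suc_divmod[of "m+2" d] False False2 si dm
          by (auto simp add: g_def l_def d_def[symmetric] Let_def split: if_splits)
      qed
    qed
    finally show ?case .
  qed
  define B where "B = B_of F"
  have trans: "(r i, l i, r (Suc i)) \<in> b_trans B" for i
  proof -
    consider "i < n" | "i = n" | "i > n" by linarith
    then show ?thesis
    proof cases
      case 1
      then have "r (Suc i) = Inl (md (run md (m_init F) (take i u)) (u!i))"
        using run_take_Suc[of i u md "m_init F"] by (auto simp add: r_def n_def q_def M_of_def md_def)
      then show ?thesis using 1 by (simp add: r_def l_def B_def B_of_def md_def)
    next
      case 2
      then show ?thesis using tF by (simp add: r_def l_def B_def B_of_def q_def s0_def run_def)
    next
      case 3
      define d where "d = i - Suc n"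
      define j where "j = d mod (m+2)"
      have si: "Suc i - Suc n = Suc d" using 3 by (simp add: d_def)
      have jl: "j < m+2" by (simp add: j_def)
      have ri: "r i = (if j \<le> m then
       Inr (q, t, Some (run md q (take j V), run pd s0 (take j V), run pd t (take j V)))
       else Inr (q, t, None))" using 3 by (simp add: r_def d_def j_def Let_def)
      have li: "l i = (if j < m then Some (V!j) else None)"
        using 3 by (simp add: l_def d_def j_def Let_def)
      have jS: "Suc d mod (m+2) = (if Suc j = m+2 then 0 else Suc j)"
        using Suc_divmod[of "m+2" d] by (simp add: j_def)
      have rS: "r (Suc i) = (let j' = (if Suc j = m+2 then 0 else Suc j) in if j' \<le> m then
       Inr (q, t, Some (run md q (take j' V), run pd s0 (take j' V), run pd t (take j' V)))
       else Inr (q, t, None))" using 3 si jS by (simp add: r_def)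
      consider "j < m" | "j = m" | "j = Suc m" using jl by linarith
      then show ?thesis
      proof cases
        case 1
        have "Suc j \<le> m" "Suc j \<noteq> m+2" using 1 by auto
        have jV: "j < length V" using 1 by (simp add: m_def)
        show ?thesis using 1 ri li rS tF \<open>Suc j \<le> m\<close> \<open>Suc j \<noteq> m+2\<close>
          by (simp add: B_def B_of_def md_def pd_def run_take_Suc[OF jV])
      next
        case 2
        then show ?thesis using ri li rS tF Mq s0V tV m0
          by (simp add: m_def B_def B_of_def)
      next
        case 3
        then show ?thesis using ri li rS tF
          by (simp add: B_def B_of_def q_def s0_def run_def)
      qed
    qed
  qed
  have word: "l i \<noteq> None \<Longrightarrow> l i = Some (upw u v (g i))" for i
  proof -
    assume ln: "l i \<noteq> None"
    consider "i < n" | "i = n" | "i > n" by linarith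
    then show ?thesis
    proof cases
      case 1 then show ?thesis by (simp add: l_def g_def upw_def n_def)
    next
      case 2 then show ?thesis using ln by (simp add: l_def)
    next
      case 3
      define d where "d = i - Suc n"
      define j where "j = d mod (m+2)"
      define c where "c = d div (m+2)"
      have li: "l i = (if j < m then Some (V!j) else None)"
        using 3 by (simp add: l_def d_def j_def Let_def)
      then have jm: "j < m" using ln by (auto split: if_splits)
      have gi: "g i = n + c*m + j" using 3 jm by (simp add: g_def d_def j_def c_def)
      have "upw u v (g i) = v ! ((c*m + j) mod length v)"
        by (simp add: gi upw_def n_def)
      also have "\<dots> = v ! (j mod length v)"
        by (simp add: mk) (metis add.commute mod_mult_self2 mult.assoc mult.commute)
      also have "\<dots> = V ! j" using jm mk by (simp add: V_def concat_rep_nth)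
      finally show ?thesis using li jm by simp
    qed
  qed
  have inf1: "infinite {i. l i \<noteq> None}"
  proof -
    have "l (Suc n + c*(m+2)) \<noteq> None" for c
    proof -
      have "(Suc n + c*(m+2) - Suc n) mod (m+2) = 0" by (simp only: add_diff_cancel_left' mod_mult_self2_is_0)
      then show ?thesis using m0 by (simp only: l_def Let_def) simp
    qed
    then have "range (\<lambda>c. Suc n + c*(m+2)) \<subseteq> {i. l i \<noteq> None}" by auto
    moreover have "inj (\<lambda>c. Suc n + c*(m+2))" by (rule inj_lin) simp
    ultimately show ?thesis using inj_range_inf by blast
  qed
  have inf2: "infinite {i. r i \<in> b_acc B}"
  proof -
    have "r (Suc n + c*(m+2) + Suc m) \<in> b_acc B" for c
    proof -
      have "(Suc n + c*(m+2) + Suc m - Suc n) mod (m+2) = Suc m"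
      proof -
        have "Suc n + c*(m+2) + Suc m - Suc n = Suc m + c*(m+2)" by simp
        then show ?thesis by (simp only: mod_mult_self1) simp
      qed
      then show ?thesis using tF by (simp only: r_def Let_def) (simp add: B_def B_of_def)
    qed
    then have "range (\<lambda>c. Suc n + c*(m+2) + Suc m) \<subseteq> {i. r i \<in> b_acc B}" by auto
    moreover have "inj (\<lambda>c. Suc n + c*(m+2) + Suc m)"
      using inj_lin[of "m+2" "Suc n + Suc m"] by (simp add: ac_simps)
    ultimately show ?thesis using inj_range_inf by blast
  qed
  have r0: "r 0 = b_init B"
    by (cases "n = 0") (auto simp add: r_def B_def B_of_def q_def M_of_def md_def n_def run_def)
  have "enba_accepts B (upw u v)"
    unfolding enba_accepts_def
  proof (intro exI[of _ r] exI[of _ l] conjI allI impI)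
    fix i assume "l i \<noteq> None"
    then show "l i = Some (upw u v (card {j. j < i \<and> l j \<noteq> None}))"
      using word cnt by simp
  qed (use r0 trans inf1 inf2 in auto)
  then show ?thesis using assms(1) by (auto simp add: UP_def enba_lang_def B_def)
qed

end
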